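(* Let $n\in\mathbb{Z}$ with $|n|\geq1$, $\alpha>0$, $R>0$ and $\kappa<\alpha^{-1}-\frac{r_0^2+n^2}{2R^2}$. If $$\left(\frac{6\,(1+n^2(2\ln2-1))}{\alpha^{-1}-\kappa}\right)^{1/2}<R,$$ then the Nehari manifold $\mathcal{M}$ is nonempty.
   Context: $r_0\approx2.404825$ is the first positive zero of the Bessel function $J_0$. $H$ is the completion of $\{u\in C^1[0,R]: u(0)=0=u(R)\}$ with respect to the inner product $(u,\tilde u)=\int_0^R\{ru_r\tilde u_r+\frac1r u\tilde u\}dr$. $\gamma_\kappa(u)=\frac12\int_0^R\{ru_r^2+\frac{n^2}{r}u^2-2(\alpha^{-1}-\kappa)ru^2+2\alpha^{-1}\frac{ru^2}{1+\alpha u^2}\}dr$ and $\mathcal{M}=\{u\in H\setminus\{0\}:\gamma_\kappa(u)=0\}$. *)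

theory Defs
  imports "HOL-Analysis.Analysis"
begin

definition besselJ0 :: "real \<Rightarrow> real" where
  "besselJ0 x = (\<Sum>k. (-1)^k * (x/2)^(2*k) / (fact k)^2)"

definition bessel_r0 :: real where
  "bessel_r0 = Inf {x. 0 < x \<and> besselJ0 x = 0}"

definition C1_0 :: "real \<Rightarrow> (real \<Rightarrow> real) \<Rightarrow> (real \<Rightarrow> real) \<Rightarrow> bool" where
  "C1_0 R \<phi> \<phi>' \<longleftrightarrow>
     (\<forall>x\<in>{0..R}. (\<phi> has_real_derivative \<phi>' x) (at x within {0..R})) \<and>
     continuous_on {0..R} \<phi>' \<and> \<phi> 0 = 0 \<and> \<phi> R = 0"

definition Hnorm2 :: "real \<Rightarrow> (real \<Rightarrow> real) \<Rightarrow> (real \<Rightarrow> real) \<Rightarrow> real" where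
  "Hnorm2 R u u' = (LINT r:{0<..<R}|lborel. r * (u' r)^2 + (u r)^2 / r)"

text \<open>Elements of H: the completion of C1_0 w.r.t. the H-inner product, realised
  concretely as functions u that are absolutely continuous on compact subintervals of (0,R]
  with derivative u', finite H-norm, and which are H-norm limits of C1_0 functions.\<close>
definition in_H :: "real \<Rightarrow> (real \<Rightarrow> real) \<Rightarrow> (real \<Rightarrow> real) \<Rightarrow> bool" where
  "in_H R u u' \<longleftrightarrow>
     (\<forall>s t. 0 < s \<and> s \<le> t \<and> t \<le> R \<longrightarrow>
        set_integrable lborel {s..t} u' \<and> u t - u s = (LINT x:{s..t}|lborel. u' x)) \<and>
     set_integrable lborel {0<..<R} (\<lambda>r. r * (u' r)^2) \<and>
     set_integrable lborel {0<..<R} (\<lambda>r. (u r)^2 / r) \<and>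
     (\<exists>\<phi> \<phi>'. (\<forall>k. C1_0 R (\<phi> k) (\<phi>' k)) \<and>
        (\<lambda>k. Hnorm2 R (\<lambda>r. \<phi> k r - u r) (\<lambda>r. \<phi>' k r - u' r)) \<longlonglongrightarrow> 0)"

definition gamma_kappa :: "real \<Rightarrow> real \<Rightarrow> int \<Rightarrow> real \<Rightarrow> (real \<Rightarrow> real) \<Rightarrow> (real \<Rightarrow> real) \<Rightarrow> real" where
  "gamma_kappa \<kappa> \<alpha> n R u u' = 1/2 * (LINT r:{0<..<R}|lborel.
      r * (u' r)^2 + (real_of_int n)^2 / r * (u r)^2
      - 2 * (1/\<alpha> - \<kappa>) * r * (u r)^2
      + 2 * (1/\<alpha>) * (r * (u r)^2 / (1 + \<alpha> * (u r)^2)))"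

definition nehari :: "real \<Rightarrow> real \<Rightarrow> int \<Rightarrow> real \<Rightarrow> ((real \<Rightarrow> real) \<times> (real \<Rightarrow> real)) set" where
  "nehari \<kappa> \<alpha> n R = {(u, u'). in_H R u u' \<and> Hnorm2 R u u' \<noteq> 0 \<and> gamma_kappa \<kappa> \<alpha> n R u u' = 0}"

end

theory Submission
  imports Defs
begin


definition msq :: "real \<Rightarrow> real" where "msq x = (max 0 x)^2"

lemma deriv_msq: "(msq has_real_derivative 2 * max 0 x) (at x)"
  unfolding msq_def
proof (cases "x = 0")
  case True
  have "((\<lambda>y. ((max 0 y)^2 - (max 0 0)^2) / (y - 0)) \<longlongrightarrow> 0) (at (0::real))"
  proof -
    have "((\<lambda>y::real. max 0 y) \<longlongrightarrow> max 0 0) (at 0)"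
      by (intro tendsto_intros)
    moreover have "\<forall>\<^sub>F y in at (0::real). max 0 y = ((max 0 y)^2 - (max 0 0)^2) / (y - 0)"
      by (auto simp: eventually_at_filter power2_eq_square max_def)
    ultimately show ?thesis by (auto intro: Lim_transform_eventually)
  qed
  then show "((\<lambda>x::real. (max 0 x)^2) has_real_derivative 2 * max 0 x) (at x)"
    using True by (simp add: has_field_derivative_iff)
next
  case False
  show "((\<lambda>x::real. (max 0 x)^2) has_real_derivative 2 * max 0 x) (at x)"
  proof (cases "x > 0")
    case True
    have d: "((\<lambda>x::real. x^2) has_real_derivative 2 * x) (at x)"
      by (auto intro!: derivative_eq_intros)
    have "((\<lambda>x::real. (max 0 x)^2) has_real_derivative 2 * x) (at x)"
      by (rule has_field_derivative_transform_within_open[OF d, of "{0<..}"]) (use True in auto)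
    then show ?thesis using True by simp
  next
    case F: False
    have d: "((\<lambda>x::real. 0) has_real_derivative 0) (at x)"
      by (auto intro!: derivative_eq_intros)
    have "((\<lambda>x::real. (max 0 x)^2) has_real_derivative 0) (at x)"
      by (rule has_field_derivative_transform_within_open[OF d, of "{..<0}"]) (use F False in auto)
    then show ?thesis using F False by simp
  qed
qed

lemma deriv_msq_chain[derivative_intros]:
  "(f has_real_derivative f') (at x within S) \<Longrightarrow>
   ((\<lambda>x. msq (f x)) has_real_derivative 2 * max 0 (f x) * f') (at x within S)"
  using DERIV_chain2[OF deriv_msq] by blast

lemma cont_msq[continuous_intros]: "continuous_on S f \<Longrightarrow> continuous_on S (\<lambda>x. msq (f x))"
  unfolding msq_def by (intro continuous_intros)

lemma ln2_ge: "11/16 \<le> ln (2::real)"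
  using ln_approx_bounds[of 2 2] by (simp add: eval_nat_numeral)



definition U :: "real \<Rightarrow> real \<Rightarrow> real" where
  "U \<rho> r = (r/\<rho>)^2 * msq (1 - r/\<rho>)"
definition DU :: "real \<Rightarrow> real \<Rightarrow> real" where
  "DU \<rho> r = (2*(r/\<rho>)*msq (1 - r/\<rho>) - 2*(r/\<rho>)^2*max 0 (1 - r/\<rho>)) / \<rho>"
definition W :: "real \<Rightarrow> real \<Rightarrow> real" where
  "W \<rho> r = (r/\<rho>)^3 * (msq (1 - r/\<rho>))^2 / \<rho>"

lemma U_deriv: "\<rho> > 0 \<Longrightarrow> (U \<rho> has_real_derivative DU \<rho> r) (at r within S)"
  unfolding U_def DU_def
  by (auto intro!: derivative_eq_intros simp: field_simps power2_eq_square)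

lemma cont_U: "\<rho> > 0 \<Longrightarrow> continuous_on S (U \<rho>)"
  unfolding U_def by (auto intro!: continuous_intros)
lemma cont_DU: "\<rho> > 0 \<Longrightarrow> continuous_on S (DU \<rho>)"
  unfolding DU_def by (auto intro!: continuous_intros)
lemma cont_W: "\<rho> > 0 \<Longrightarrow> continuous_on S (W \<rho>)"
  unfolding W_def by (auto intro!: continuous_intros)

lemma U_sq_div: "\<rho> > 0 \<Longrightarrow> r > 0 \<Longrightarrow> (U \<rho> r)^2 / r = W \<rho> r"
  unfolding U_def W_def by (simp add: field_simps power2_eq_square power3_eq_cube)

lemma U_vanish: "\<rho> > 0 \<Longrightarrow> \<rho> \<le> r \<Longrightarrow> U \<rho> r = 0 \<and> DU \<rho> r = 0 \<and> W \<rho> r = 0"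
proof -
  assume "\<rho> > 0" "\<rho> \<le> r"
  then have "1 - r/\<rho> \<le> 0" by (simp add: field_simps)
  then have "max 0 (1 - r/\<rho>) = 0" by simp
  then show ?thesis unfolding U_def DU_def W_def msq_def by simp
qed

lemma U_bound: "\<rho> > 0 \<Longrightarrow> 0 \<le> r \<Longrightarrow> 0 \<le> U \<rho> r \<and> U \<rho> r \<le> 1"
proof -
  assume h: "\<rho> > 0" "0 \<le> r"
  show ?thesis
  proof (cases "r \<le> \<rho>")
    case True
    define s where "s = r/\<rho>"
    have s: "0 \<le> s" "s \<le> 1" using h True by (auto simp: s_def field_simps)
    have "U \<rho> r = (s * (1 - s))^2" unfolding U_def msq_def s_def[symmetric] using s
      by (simp add: power_mult_distrib)
    moreover have "0 \<le> s * (1 - s)" "s * (1 - s) \<le> 1" using s by (auto simp: mult_le_one)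
    ultimately show ?thesis by (simp add: power_le_one)
  next
    case False then show ?thesis using U_vanish[of \<rho> r] h by auto
  qed
qed

lemma ftc_scaled:
  assumes "\<rho> > 0" and "\<And>s. (P has_real_derivative p s) (at s)"
  shows "((\<lambda>r. p (r/\<rho>) / \<rho>) has_integral (P 1 - P 0)) {0..\<rho>}"
proof -
  have "((\<lambda>r. P (r/\<rho>)) has_real_derivative p (r/\<rho>) / \<rho>) (at r within {0..\<rho>})" for r
  proof -
    have "((\<lambda>r. r/\<rho>) has_real_derivative 1/\<rho>) (at r within {0..\<rho>})"
      using assms(1) by (auto intro!: derivative_eq_intros)
    from DERIV_chain2[OF assms(2) this] show ?thesis using assms(1) by simp
  qed
  then have "((\<lambda>r. p (r/\<rho>) / \<rho>) has_integral (P (\<rho>/\<rho>) - P (0/\<rho>))) {0..\<rho>}"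
    by (intro fundamental_theorem_of_calculus) (use assms(1) in \<open>auto simp: has_real_derivative_iff_has_vector_derivative[symmetric]\<close>)
  then show ?thesis using assms(1) by simp
qed

lemma extend_zero:
  fixes f :: "real \<Rightarrow> real"
  assumes "0 < \<rho>" "\<rho> \<le> R" "(f has_integral I) {0..\<rho>}" "\<And>r. \<rho> \<le> r \<Longrightarrow> r \<le> R \<Longrightarrow> f r = 0"
  shows "(f has_integral I) {0..R}"
proof -
  have "(f has_integral 0) {\<rho>..R}" by (rule has_integral_is_0) (use assms(4) in auto)
  from has_integral_combine[OF _ _ assms(3) this] assms(1,2) show ?thesis by simp
qed

lemma I1: assumes "0 < \<rho>" "\<rho> \<le> R"
  shows "((\<lambda>r. r * (DU \<rho> r)^2) has_integral 1/105) {0..R}"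
proof -
  define P :: "real \<Rightarrow> real" where "P = (\<lambda>s. s ^ 4 - 24/5* s ^ 5 + 26/3* s ^ 6 - 48/7* s ^ 7 + 2* s ^ 8)"
  define p where "p = (\<lambda>s::real. s * (2 * s * (1 - s)^2 - 2 * s ^ 2 * (1 - s))^2)"
  have d: "(P has_real_derivative p s) (at s)" for s
    unfolding P_def p_def
    by (rule derivative_eq_intros refl)+ (simp add: algebra_simps power2_eq_square power3_eq_cube eval_nat_numeral)
  have "((\<lambda>r. p (r/\<rho>) / \<rho>) has_integral (P 1 - P 0)) {0..\<rho>}" by (rule ftc_scaled[OF assms(1) d])
  moreover have "P 1 - P 0 = 1/105" unfolding P_def by simp
  ultimately have "((\<lambda>r. p (r/\<rho>) / \<rho>) has_integral 1/105) {0..\<rho>}" by simp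
  then have "((\<lambda>r. r * (DU \<rho> r)^2) has_integral 1/105) {0..\<rho>}"
  proof (rule has_integral_eq[rotated])
    fix r assume "r \<in> {0..\<rho>}"
    then have m: "max 0 (1 - r/\<rho>) = 1 - r/\<rho>" using assms(1) by (auto simp: field_simps)
    show "p (r/\<rho>) / \<rho> = r * (DU \<rho> r)^2"
      unfolding p_def DU_def msq_def m using assms(1) by (simp add: field_simps) (simp add: power_numeral_reduce)
  qed
  then show ?thesis by (rule extend_zero[OF assms]) (use U_vanish assms in auto)
qed

lemma I2: assumes "0 < \<rho>" "\<rho> \<le> R"
  shows "(W \<rho> has_integral 1/280) {0..R}"
proof -
  define P :: "real \<Rightarrow> real" where "P = (\<lambda>s. 1/4* s ^ 4 - 4/5* s ^ 5 + s ^ 6 - 4/7* s ^ 7 + 1/8* s ^ 8)"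
  define p where "p = (\<lambda>s::real. s ^ 3*(1-s)^4)"
  have d: "(P has_real_derivative p s) (at s)" for s
    unfolding P_def p_def
    by (rule derivative_eq_intros refl)+ (simp add: algebra_simps power2_eq_square power3_eq_cube eval_nat_numeral)
  have "((\<lambda>r. p (r/\<rho>) / \<rho>) has_integral (P 1 - P 0)) {0..\<rho>}" by (rule ftc_scaled[OF assms(1) d])
  moreover have "P 1 - P 0 = 1/280" unfolding P_def by simp
  ultimately have "((\<lambda>r. p (r/\<rho>) / \<rho>) has_integral 1/280) {0..\<rho>}" by simp
  then have "(W \<rho> has_integral 1/280) {0..\<rho>}"
  proof (rule has_integral_eq[rotated])
    fix r assume "r \<in> {0..\<rho>}"
    then have m: "max 0 (1 - r/\<rho>) = 1 - r/\<rho>" using assms(1) by (auto simp: field_simps)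
    show "p (r/\<rho>) / \<rho> = W \<rho> r"
      unfolding p_def W_def msq_def m using assms(1) by simp
  qed
  then show ?thesis by (rule extend_zero[OF assms]) (use U_vanish assms in auto)
qed

lemma I3: assumes "0 < \<rho>" "\<rho> \<le> R"
  shows "((\<lambda>r. r * (U \<rho> r)^2) has_integral \<rho>^2/1260) {0..R}"
proof -
  define P :: "real \<Rightarrow> real" where "P = (\<lambda>s. 1/6* s ^ 6 - 4/7* s ^ 7 + 3/4* s ^ 8 - 4/9* s ^ 9 + 1/10* s ^ 10)"
  define p where "p = (\<lambda>s::real. s ^ 5*(1-s)^4)"
  have d: "(P has_real_derivative p s) (at s)" for s
    unfolding P_def p_def
    by (rule derivative_eq_intros refl)+ (simp add: algebra_simps power2_eq_square power3_eq_cube eval_nat_numeral)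
  have "((\<lambda>r. p (r/\<rho>) / \<rho>) has_integral (P 1 - P 0)) {0..\<rho>}" by (rule ftc_scaled[OF assms(1) d])
  moreover have "P 1 - P 0 = 1/1260" unfolding P_def by simp
  ultimately have "((\<lambda>r. p (r/\<rho>) / \<rho>) has_integral 1/1260) {0..\<rho>}" by simp
  from has_integral_mult_right[OF this, of "\<rho>^2"]
  have "((\<lambda>r. \<rho>^2 * (p (r/\<rho>) / \<rho>)) has_integral \<rho>^2/1260) {0..\<rho>}" by simp
  then have "((\<lambda>r. r * (U \<rho> r)^2) has_integral \<rho>^2/1260) {0..\<rho>}"
  proof (rule has_integral_eq[rotated])
    fix r assume "r \<in> {0..\<rho>}"
    then have m: "max 0 (1 - r/\<rho>) = 1 - r/\<rho>" using assms(1) by (auto simp: field_simps)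
    show "\<rho>^2 * (p (r/\<rho>) / \<rho>) = r * (U \<rho> r)^2"
      unfolding p_def U_def msq_def m using assms(1) by (simp add: field_simps power_numeral_reduce power2_eq_square)
  qed
  then show ?thesis by (rule extend_zero[OF assms]) (use U_vanish assms in auto)
qed

lemma lint_eq:
  fixes f :: "real \<Rightarrow> real"
  assumes "continuous_on {0..R} f"
  shows "(LINT r:{0<..<R}|lborel. f r) = integral {0..R} f"
proof -
  have "set_integrable lborel {0..R} f" by (rule borel_integrable_atLeastAtMost'[OF assms])
  then have "set_integrable lborel {0<..<R} f" by (rule set_integrable_subset) auto
  then have "(LINT r:{0<..<R}|lborel. f r) = integral {0<..<R} f"
    by (rule set_borel_integral_eq_integral)
  then show ?thesis by (simp add: integral_open_interval_real)
qed



lemma nl_le: "0 \<le> r \<Longrightarrow> 0 \<le> x \<Longrightarrow> (\<alpha>::real) > 0 \<Longrightarrow> r * x / (1 + \<alpha> * x) \<le> r / \<alpha>"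
proof -
  assume h: "0 \<le> r" "0 \<le> x" "\<alpha> > 0"
  have pos: "1 + \<alpha> * x > 0" using h by (simp add: add_pos_nonneg)
  have "r * x / (1 + \<alpha> * x) = (r / \<alpha>) * (\<alpha> * x / (1 + \<alpha> * x))"
    using h pos by (simp add: field_simps)
  also have "\<dots> \<le> (r / \<alpha>) * 1"
    using h pos by (intro mult_left_mono) auto
  finally show ?thesis by simp
qed

lemma nl_ge: "0 \<le> r \<Longrightarrow> 0 \<le> u \<Longrightarrow> u \<le> 1 \<Longrightarrow> (\<alpha>::real) > 0 \<Longrightarrow>
   t^2 / (1 + \<alpha> * t^2) * (r * u^2) \<le> r * (t * u)^2 / (1 + \<alpha> * (t * u)^2)"
proof -
  assume h: "0 \<le> r" "0 \<le> u" "u \<le> 1" "\<alpha> > 0"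
  have u2: "u^2 \<le> 1" using h by (simp add: power_le_one)
  have a: "0 < 1 + \<alpha> * (t * u)^2" using h by (simp add: add_pos_nonneg)
  have b: "1 + \<alpha> * (t * u)^2 \<le> 1 + \<alpha> * t^2"
    using h u2 by (simp add: power_mult_distrib mult_left_mono mult_right_le_one_le)
  have "t^2 / (1 + \<alpha> * t^2) * (r * u^2) = r * (t * u)^2 / (1 + \<alpha> * t^2)"
    by (simp add: power_mult_distrib)
  also have "\<dots> \<le> r * (t * u)^2 / (1 + \<alpha> * (t * u)^2)"
    using a b h by (intro divide_left_mono) (auto intro!: mult_pos_pos add_pos_nonneg)
  finally show ?thesis .
qed

lemma alg1:
  assumes "0 < 1 + \<alpha> * \<tau>" "0 < (\<alpha>::real)"
  shows "\<tau> * (\<delta> - 2*a/\<alpha>) + 2*(1/\<alpha>) * (\<tau> / (1 + \<alpha> * \<tau>) * a) = \<tau> * \<delta> - 2 * a * \<tau>^2 / (1 + \<alpha> * \<tau>)"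
proof -
  define w where "w = 1 + \<alpha> * \<tau>"
  have w: "w \<noteq> 0" "\<alpha> \<noteq> 0" using assms unfolding w_def by auto
  have t: "\<tau> = (w - 1) / \<alpha>" using w unfolding w_def by (simp add: field_simps)
  have "2*a/\<alpha> * \<tau> - 2*(1/\<alpha>) * (\<tau> / w * a) = 2 * a * \<tau>^2 / w"
    unfolding t using w by (simp add: field_simps power2_eq_square)
  then show ?thesis unfolding w_def[symmetric] by (simp add: algebra_simps)
qed

theorem lemma4p2:
  fixes n :: int and \<alpha> R \<kappa> :: real
  assumes "\<bar>n\<bar> \<ge> 1" and "\<alpha> > 0" and "R > 0"
    and "\<kappa> < 1/\<alpha> - (bessel_r0^2 + (real_of_int n)^2) / (2 * R^2)"
    and "sqrt (6 * (1 + (real_of_int n)^2 * (2 * ln 2 - 1)) / (1/\<alpha> - \<kappa>)) < R"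
  shows "nehari \<kappa> \<alpha> n R \<noteq> {}"
proof -
  define c where "c = 1/\<alpha> - \<kappa>"
  have "(bessel_r0^2 + (real_of_int n)^2) / (2 * R^2) \<ge> 0"
    using assms(3) by (intro divide_nonneg_pos) auto
  then have cpos: "c > 0" using assms(4) unfolding c_def by linarith
  have ca: "c + \<kappa> = 1/\<alpha>" unfolding c_def by simp
  have ia: "1/\<alpha> > 0" using assms(2) by simp
  define X where "X = 6 * (1 + (real_of_int n)^2 * (2 * ln 2 - 1))"
  have sX: "sqrt (X / c) < R" using assms(5) unfolding X_def c_def .
  have "X / c < R^2"
  proof (cases "X / c < 0")
    case True then show ?thesis using assms(3) by (smt (verit) zero_less_power)
  next
    case False
    then have "sqrt (X/c) ^ 2 < R ^ 2"
      using sX by (intro power_strict_mono) auto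
    then show ?thesis using False by simp
  qed
  then have XcR: "X < c * R^2" using cpos by (simp add: divide_less_eq mult.commute)
  define N2 where "N2 = (real_of_int n)^2"
  have N2: "N2 \<ge> 0" unfolding N2_def by simp
  have "(real_of_int n)^2 * (2 * ln 2 - 1) \<ge> N2 * (3/8)"
    unfolding N2_def[symmetric] using ln2_ge N2 by (intro mult_left_mono) auto
  moreover have "X = 6 + 6 * ((real_of_int n)^2 * (2 * ln 2 - 1))"
    by (simp only: X_def distrib_left mult_1_right)
  ultimately have X6: "X \<ge> 6 + 9/4 * N2" by linarith
  define C where "C = (1/1260::real)"
  define K where "K = 1/105 + N2/280"
  have Kpos: "K > 0" unfolding K_def using N2 by simp
  have KR: "K - 2 * c * R^2 * C < 0"
    using X6 XcR unfolding K_def C_def by simp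
  define \<rho> where "\<rho> = (if K + 2*\<kappa>*R^2*C > 0 then R else sqrt (K/((c-\<kappa>)*C)))"
  have rho: "0 < \<rho> \<and> \<rho> \<le> R \<and> K - 2*c*\<rho>^2*C < 0 \<and> K + 2*\<kappa>*\<rho>^2*C > 0"
  proof (cases "K + 2*\<kappa>*R^2*C > 0")
    case True
    then show ?thesis unfolding \<rho>_def using assms(3) KR by simp
  next
    case False
    have RC: "R^2 * C > 0" using assms(3) unfolding C_def by simp
    have kneg: "\<kappa> < 0"
    proof (rule ccontr)
      assume "\<not> \<kappa> < 0"
      then have "2*\<kappa>*R^2*C \<ge> 0" using RC by (simp add: mult.assoc)
      then show False using False Kpos by linarith
    qed
    have cmk: "c - \<kappa> > 0" using cpos kneg by linarith
    define q where "q = K/((c-\<kappa>)*C)"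
    have qpos: "q > 0" unfolding q_def C_def using Kpos cmk by simp
    have "-2*\<kappa> < c - \<kappa>" using ca ia by linarith
    then have "-2*\<kappa>*(R^2*C) < (c - \<kappa>)*(R^2*C)" using RC by (intro mult_strict_right_mono) auto
    then have "K < (c - \<kappa>)*C*R^2" using False by (simp add: algebra_simps)
    then have "q < R^2" unfolding q_def using cmk by (simp add: divide_less_eq C_def mult.commute)
    then have "sqrt q < sqrt (R^2)" by (rule real_sqrt_less_mono)
    then have "sqrt q < R" using assms(3) by simp
    moreover have rq: "\<rho> = sqrt q" unfolding \<rho>_def q_def using False by simp
    moreover have r2: "\<rho>^2 * C = K/(c-\<kappa>)" using qpos cmk unfolding rq q_def C_def by (simp add: field_simps)
    moreover have "K - 2*c*(K/(c-\<kappa>)) = - K*(c+\<kappa>)/(c-\<kappa>)" using cmk by (simp add: field_simps)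
    moreover have "- K*(c+\<kappa>)/(c-\<kappa>) < 0" using cmk Kpos ca ia by (intro divide_neg_pos) auto
    moreover have "K + 2*\<kappa>*(K/(c-\<kappa>)) = K*(c+\<kappa>)/(c-\<kappa>)" using cmk by (simp add: field_simps)
    moreover have "K*(c+\<kappa>)/(c-\<kappa>) > 0" using cmk Kpos ca ia by simp
    ultimately show ?thesis using qpos by (simp add: mult.assoc)
  qed
  have rpos: "0 < \<rho>" and rR: "\<rho> \<le> R" using rho by auto
  define E where "E = K - 2*c*\<rho>^2*C"
  define \<delta> where "\<delta> = K + 2*\<kappa>*\<rho>^2*C"
  have Eneg: "E < 0" and dpos: "\<delta> > 0" using rho unfolding E_def \<delta>_def by auto
  define a where "a = \<rho>^2 * C"
  have apos: "a > 0" unfolding a_def C_def using rpos by simp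
  have Ed: "E = \<delta> - 2*a/\<alpha>" unfolding E_def \<delta>_def a_def c_def by (simp add: algebra_simps)
  define NL where "NL t r = r * (t * U \<rho> r)^2 / (1 + \<alpha> * (t * U \<rho> r)^2)" for t r
  define H where "H t r = t^2 * (r * (DU \<rho> r)^2 + N2 * W \<rho> r - 2*c*(r * (U \<rho> r)^2)) + 2*(1/\<alpha>) * NL t r" for t r
  define G where "G t = gamma_kappa \<kappa> \<alpha> n R (\<lambda>r. t * U \<rho> r) (\<lambda>r. t * DU \<rho> r)" for t
  have den: "1 + \<alpha> * (t * U \<rho> r)^2 > 0" for t r using assms(2) by (simp add: add_pos_nonneg)
  have den': "1 + \<alpha> * (t * U \<rho> r)^2 \<noteq> 0" for t r using den[of t r] by simp
  have contH: "continuous_on S (\<lambda>(t, r). H t r)" for S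
    unfolding H_def NL_def using den rpos assms(2)
    by (auto intro!: continuous_intros cont_U[THEN continuous_on_compose2] cont_DU[THEN continuous_on_compose2]
        cont_W[THEN continuous_on_compose2] simp: split_beta den')
  have contH1: "continuous_on S (H t)" for S t
    unfolding H_def NL_def using den rpos assms(2)
    by (auto intro!: continuous_intros cont_U[THEN continuous_on_compose2] cont_DU[THEN continuous_on_compose2]
        cont_W[THEN continuous_on_compose2] simp: den')
  have contNL: "continuous_on S (NL t)" for S t
    unfolding NL_def using den rpos assms(2)
    by (auto intro!: continuous_intros cont_U[THEN continuous_on_compose2] simp: den')
  have G_eq: "G t = 1/2 * integral {0..R} (H t)" for t
  proof -
    have "G t = 1/2 * (LINT r:{0<..<R}|lborel. H t r)"
      unfolding G_def gamma_kappa_def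
    proof (intro arg_cong[where f="\<lambda>x. 1/2 * x"] set_lebesgue_integral_cong allI impI)
      show "{0<..<R} \<in> sets lborel" by simp
      fix r assume "r \<in> {0<..<R}"
      then have r: "r > 0" by simp
      have "(U \<rho> r)^2 = r * W \<rho> r" using U_sq_div[OF rpos r] r by (simp add: field_simps)
      then have "r * (t * DU \<rho> r)^2 + (real_of_int n)^2 / r * (t * U \<rho> r)^2
          - 2 * (1/\<alpha> - \<kappa>) * r * (t * U \<rho> r)^2
          = t^2 * (r * (DU \<rho> r)^2 + N2 * W \<rho> r - 2*c*(r * (U \<rho> r)^2))"
        using r unfolding N2_def c_def by (simp add: power_mult_distrib field_simps)
      then show "r * (t * DU \<rho> r)^2 + (real_of_int n)^2 / r * (t * U \<rho> r)^2
          - 2 * (1/\<alpha> - \<kappa>) * r * (t * U \<rho> r)^2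
          + 2 * (1/\<alpha>) * (r * (t * U \<rho> r)^2 / (1 + \<alpha> * (t * U \<rho> r)^2)) = H t r"
        unfolding H_def NL_def by simp
    qed
    also have "\<dots> = 1/2 * integral {0..R} (H t)"
      using lint_eq[OF contH1] by simp
    finally show ?thesis .
  qed
  have NLint: "(NL t has_integral integral {0..R} (NL t)) {0..R}" for t
    by (intro integrable_integral integrable_continuous_interval contNL)
  have Hint: "(H t has_integral (t^2 * E + 2*(1/\<alpha>) * integral {0..R} (NL t))) {0..R}" for t
  proof -
    have i1: "((\<lambda>r. r * (DU \<rho> r)^2 + N2 * W \<rho> r - 2*c*(r * (U \<rho> r)^2)) has_integral
              (1/105 + N2 * (1/280) - 2*c*(\<rho>^2/1260))) {0..R}"
      by (intro has_integral_diff has_integral_add has_integral_mult_right I1 I2 I3 rpos rR)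
    have "1/105 + N2 * (1/280) - 2*c*(\<rho>^2/1260) = E" unfolding E_def K_def C_def by simp
    with has_integral_add[OF has_integral_mult_right[OF i1, of "t^2"] has_integral_mult_right[OF NLint, of "2*(1/\<alpha>)"]]
    show ?thesis unfolding H_def by simp
  qed
  have Gv: "G t = 1/2 * (t^2 * E + 2*(1/\<alpha>) * integral {0..R} (NL t))" for t
    using G_eq Hint integral_unique by metis
  have NLup: "integral {0..R} (NL t) \<le> R^2 / (2*\<alpha>)" for t
  proof -
    have "((\<lambda>r. r / \<alpha>) has_integral (R^2/(2*\<alpha>) - 0^2/(2*\<alpha>))) {0..R}"
      using assms(2,3)
      by (intro fundamental_theorem_of_calculus)
         (auto intro!: derivative_eq_intros simp: has_real_derivative_iff_has_vector_derivative[symmetric])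
    then have "((\<lambda>r. r / \<alpha>) has_integral R^2/(2*\<alpha>)) {0..R}" by simp
    then show ?thesis
    proof (rule has_integral_le[OF NLint])
      fix x assume "x \<in> {0..R}"
      then have "0 \<le> x" by simp
      then show "NL t x \<le> x / \<alpha>" unfolding NL_def by (rule nl_le) (use assms(2) in auto)
    qed
  qed
  have NLlo: "t^2 / (1 + \<alpha> * t^2) * a \<le> integral {0..R} (NL t)" for t
  proof -
    have "((\<lambda>r. t^2 / (1 + \<alpha> * t^2) * (r * (U \<rho> r)^2)) has_integral t^2 / (1 + \<alpha> * t^2) * (\<rho>^2/1260)) {0..R}"
      by (intro has_integral_mult_right I3 rpos rR)
    then have "((\<lambda>r. t^2 / (1 + \<alpha> * t^2) * (r * (U \<rho> r)^2)) has_integral t^2 / (1 + \<alpha> * t^2) * a) {0..R}"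
      by (simp add: a_def C_def)
    then show ?thesis
    proof (rule has_integral_le[OF _ NLint])
      fix x assume "x \<in> {0..R}"
      then have x: "0 \<le> x" by simp
      have ub: "0 \<le> U \<rho> x" "U \<rho> x \<le> 1" using U_bound[OF rpos x] by auto
      show "t^2 / (1 + \<alpha> * t^2) * (x * (U \<rho> x)^2) \<le> NL t x"
        unfolding NL_def by (rule nl_ge[OF x ub assms(2)])
    qed
  qed
  define t1 where "t1 = sqrt (\<delta> / (4 * a))"
  have t1pos: "t1 > 0" unfolding t1_def using dpos apos by simp
  have t1sq: "t1^2 = \<delta> / (4 * a)" unfolding t1_def using dpos apos by simp
  have G1: "G t1 > 0"
  proof -
    define \<tau> where "\<tau> = t1^2"
    have tau: "\<tau> > 0" unfolding \<tau>_def using t1pos by simp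
    have d1: "1 + \<alpha> * \<tau> > 0" using tau assms(2) by (simp add: add_pos_pos)
    have lo: "\<tau> / (1 + \<alpha> * \<tau>) * a \<le> integral {0..R} (NL t1)" using NLlo unfolding \<tau>_def .
    have "2 * G t1 = \<tau> * E + 2*(1/\<alpha>) * integral {0..R} (NL t1)" unfolding Gv \<tau>_def by simp
    also have "\<dots> \<ge> \<tau> * E + 2*(1/\<alpha>) * (\<tau> / (1 + \<alpha> * \<tau>) * a)"
      using lo ia by (intro add_left_mono mult_left_mono) auto
    finally have g: "2 * G t1 \<ge> \<tau> * E + 2*(1/\<alpha>) * (\<tau> / (1 + \<alpha> * \<tau>) * a)" .
    have eq: "\<tau> * E + 2*(1/\<alpha>) * (\<tau> / (1 + \<alpha> * \<tau>) * a) = \<tau> * \<delta> - 2 * a * \<tau>^2 / (1 + \<alpha> * \<tau>)"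
      unfolding Ed using alg1[OF d1 assms(2)] .
    have "2 * a * \<tau>^2 / (1 + \<alpha> * \<tau>) \<le> 2 * a * \<tau>^2"
      using d1 apos tau assms(2) by (simp add: divide_le_eq)
    moreover have "\<tau> * \<delta> - 2 * a * \<tau>^2 = \<tau> * \<delta> / 2"
      unfolding \<tau>_def t1sq using apos by (simp add: field_simps power2_eq_square)
    moreover have "\<tau> * \<delta> / 2 > 0" using tau dpos by simp
    ultimately show ?thesis using g eq by linarith
  qed
  define Y where "Y = R^2 / (\<alpha>^2 * (-E))"
  define t2 where "t2 = t1 + sqrt Y + 1"
  have Ypos: "Y > 0" unfolding Y_def using Eneg assms(2,3) by (intro divide_pos_pos mult_pos_pos) auto
  have t12: "t1 \<le> t2" unfolding t2_def using Ypos by (simp add: add_nonneg_nonneg)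
  have G2: "G t2 < 0"
  proof -
    have "sqrt Y < t2" unfolding t2_def using t1pos by simp
    then have "sqrt Y ^ 2 < t2 ^ 2" using Ypos by (intro power_strict_mono) auto
    then have "Y < t2^2" using Ypos by simp
    then have "Y * (-E) < t2^2 * (-E)" using Eneg by (intro mult_strict_right_mono) auto
    moreover have "Y * (-E) = R^2/\<alpha>^2" unfolding Y_def using Eneg assms(2) by (simp add: field_simps)
    ultimately have A: "t2^2 * E + R^2/\<alpha>^2 < 0" by simp
    have "2 * G t2 = t2^2 * E + 2*(1/\<alpha>) * integral {0..R} (NL t2)" unfolding Gv by simp
    also have "\<dots> \<le> t2^2 * E + 2*(1/\<alpha>) * (R^2 / (2*\<alpha>))"
      using NLup[of t2] ia by (intro add_left_mono mult_left_mono) auto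
    also have "\<dots> = t2^2 * E + R^2/\<alpha>^2" by (simp add: power2_eq_square)
    finally show ?thesis using A by simp
  qed
  have contG: "continuous_on {t1..t2} G"
  proof -
    have "continuous_on UNIV (\<lambda>t. integral (cbox 0 R) (H t))"
      by (rule integral_continuous_on_param) (rule contH)
    then have "continuous_on UNIV (\<lambda>t. 1/2 * integral {0..R} (H t))"
      by (auto intro!: continuous_intros simp: cbox_interval)
    moreover have "G = (\<lambda>t. 1/2 * integral {0..R} (H t))" by (rule ext) (rule G_eq)
    ultimately show ?thesis by (auto intro: continuous_on_subset)
  qed
  obtain t where t: "t1 \<le> t" "t \<le> t2" "G t = 0"
    using IVT2'[of G t2 0 t1, OF _ _ t12 contG] G1 G2 by auto
  have tpos: "t > 0" using t t1pos by simp
  have derivT: "((\<lambda>r. t * U \<rho> r) has_real_derivative t * DU \<rho> r) (at r within S)" for r S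
    using U_deriv[OF rpos] by (intro DERIV_cmult) auto
  have contT: "continuous_on S (\<lambda>r. t * DU \<rho> r)" for S
    using cont_DU[OF rpos] by (intro continuous_intros)
  have C1: "C1_0 R (\<lambda>r. t * U \<rho> r) (\<lambda>r. t * DU \<rho> r)"
    unfolding C1_0_def using derivT contT U_vanish[OF rpos rR]
    by (auto simp: U_def msq_def)
  have inH: "in_H R (\<lambda>r. t * U \<rho> r) (\<lambda>r. t * DU \<rho> r)"
    unfolding in_H_def
  proof (intro conjI allI impI)
    fix s s' :: real assume h: "0 < s \<and> s \<le> s' \<and> s' \<le> R"
    show si: "set_integrable lborel {s..s'} (\<lambda>r. t * DU \<rho> r)"
      by (rule borel_integrable_atLeastAtMost'[OF contT])
    have "((\<lambda>r. t * DU \<rho> r) has_integral (t * U \<rho> s' - t * U \<rho> s)) {s..s'}"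
      using h derivT
      by (intro fundamental_theorem_of_calculus) (auto simp: has_real_derivative_iff_has_vector_derivative[symmetric])
    then show "t * U \<rho> s' - t * U \<rho> s = (LINT x:{s..s'}|lborel. t * DU \<rho> x)"
      using set_borel_integral_eq_integral(2)[OF si] integral_unique by metis
  next
    have "continuous_on {0..R} (\<lambda>r. r * (t * DU \<rho> r)^2)"
      using cont_DU[OF rpos] by (intro continuous_intros)
    from borel_integrable_atLeastAtMost'[OF this]
    show "set_integrable lborel {0<..<R} (\<lambda>r. r * (t * DU \<rho> r)^2)"
      by (rule set_integrable_subset) auto
  next
    have "continuous_on {0..R} (\<lambda>r. t^2 * W \<rho> r)"
      using cont_W[OF rpos] by (intro continuous_intros)
    from borel_integrable_atLeastAtMost'[OF this]
    have "set_integrable lborel {0<..<R} (\<lambda>r. t^2 * W \<rho> r)"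
      by (rule set_integrable_subset) auto
    moreover have "set_integrable lborel {0<..<R} (\<lambda>r. t^2 * W \<rho> r) =
         set_integrable lborel {0<..<R} (\<lambda>r. (t * U \<rho> r)^2 / r)"
      by (rule set_integrable_cong) (auto simp: power_mult_distrib U_sq_div[OF rpos] simp flip: U_sq_div[OF rpos])
    ultimately show "set_integrable lborel {0<..<R} (\<lambda>r. (t * U \<rho> r)^2 / r)" by simp
  next
    show "\<exists>\<phi> \<phi>'. (\<forall>k. C1_0 R (\<phi> k) (\<phi>' k)) \<and>
        (\<lambda>k. Hnorm2 R (\<lambda>r. \<phi> k r - t * U \<rho> r) (\<lambda>r. \<phi>' k r - t * DU \<rho> r)) \<longlonglongrightarrow> 0"
      by (rule exI[of _ "\<lambda>k. (\<lambda>r. t * U \<rho> r)"], rule exI[of _ "\<lambda>k. (\<lambda>r. t * DU \<rho> r)"])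
         (simp add: C1 Hnorm2_def)
  qed
  have Hn: "Hnorm2 R (\<lambda>r. t * U \<rho> r) (\<lambda>r. t * DU \<rho> r) \<noteq> 0"
  proof -
    have "Hnorm2 R (\<lambda>r. t * U \<rho> r) (\<lambda>r. t * DU \<rho> r) = (LINT r:{0<..<R}|lborel. t^2 * (r * (DU \<rho> r)^2 + W \<rho> r))"
      unfolding Hnorm2_def
    proof (intro set_lebesgue_integral_cong allI impI)
      show "{0<..<R} \<in> sets lborel" by simp
      fix r assume "r \<in> {0<..<R}"
      then have r: "r > 0" by simp
      show "r * (t * DU \<rho> r)^2 + (t * U \<rho> r)^2 / r = t^2 * (r * (DU \<rho> r)^2 + W \<rho> r)"
      proof -
        have "(t * U \<rho> r)^2 / r = t^2 * ((U \<rho> r)^2 / r)" by (simp add: power_mult_distrib)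
        also have "\<dots> = t^2 * W \<rho> r" using U_sq_div[OF rpos r] by simp
        finally have e: "(t * U \<rho> r)^2 / r = t^2 * W \<rho> r" .
        show ?thesis unfolding e by (simp add: power_mult_distrib algebra_simps)
      qed
    qed
    also have "\<dots> = integral {0..R} (\<lambda>r. t^2 * (r * (DU \<rho> r)^2 + W \<rho> r))"
      by (rule lint_eq) (use cont_DU[OF rpos] cont_W[OF rpos] in \<open>intro continuous_intros\<close>)
    also have "\<dots> = t^2 * (1/105 + 1/280)"
      by (intro integral_unique has_integral_mult_right has_integral_add I1 I2 rpos rR)
    finally have e: "Hnorm2 R (\<lambda>r. t * U \<rho> r) (\<lambda>r. t * DU \<rho> r) = t^2 * (1/105 + 1/280)" .
    have nz: "t^2 * (1/105 + 1/280) \<noteq> (0::real)" using tpos by simp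
    show ?thesis unfolding e by (rule nz)
  qed
  have "((\<lambda>r. t * U \<rho> r), (\<lambda>r. t * DU \<rho> r)) \<in> nehari \<kappa> \<alpha> n R"
    unfolding nehari_def using inH Hn t(3) unfolding G_def by simp
  then show ?thesis by auto
qed


end
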